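(* Let $G$ be a group, $K$ a subgroup that is a retract of $G$ with retraction $\phi$, and $L,R$ nonempty subsets of $G$. Then $2\mathrm{S}(G;L,R)$ is weakly connected if and only if $2\mathrm{S}(K;\phi(L),\phi(R))$ is weakly connected and any two elements of $\ker\phi$ are weakly connected to each other in $2\mathrm{S}(G;L,R)$.
   Context: For nonempty subsets $L,R$ of a group $G$, the two-sided group digraph $2\mathrm{S}(G;L,R)$ has vertex set $G$ and a directed arc $(g,h)$ if and only if $h=l^{-1}gr$ for some $l\in L$, $r\in R$. Vertex $g$ is weakly connected to $h$ if there is a sequence $g=g_0,\dots,g_n=h$ with, for each $i$, $(g_{i-1},g_i)$ or $(g_i,g_{i-1})$ an arc (the intermediate vertices may be arbitrary elements of $G$); a digraph is weakly connected if every pair of vertices is weakly connected. A subgroup $K$ of $G$ is a retract of $G$ with retraction $\phi$ if $\phi:G\to G$ is a group homomorphism with $\phi(g)\in K$ for all $g\in G$ and $\phi(k)=k$ for all $k\in K$ (equivalently, $G=\ker\phi\rtimes K$). *)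

theory Defs
  imports "HOL-Algebra.Algebra"
begin

definition two_sided_arc :: "('a, 'b) monoid_scheme \<Rightarrow> 'a set \<Rightarrow> 'a set \<Rightarrow> 'a \<Rightarrow> 'a \<Rightarrow> bool" where
  "two_sided_arc G L R g h \<longleftrightarrow> g \<in> carrier G \<and> h \<in> carrier G \<and>
     (\<exists>l\<in>L. \<exists>r\<in>R. h = inv\<^bsub>G\<^esub> l \<otimes>\<^bsub>G\<^esub> g \<otimes>\<^bsub>G\<^esub> r)"

definition weakly_connected_to :: "('a, 'b) monoid_scheme \<Rightarrow> 'a set \<Rightarrow> 'a set \<Rightarrow> 'a \<Rightarrow> 'a \<Rightarrow> bool" where
  "weakly_connected_to G L R g h \<longleftrightarrow>
     (\<lambda>x y. two_sided_arc G L R x y \<or> two_sided_arc G L R y x)\<^sup>*\<^sup>* g h"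

definition weakly_connected_2S :: "('a, 'b) monoid_scheme \<Rightarrow> 'a set \<Rightarrow> 'a set \<Rightarrow> bool" where
  "weakly_connected_2S G L R \<longleftrightarrow>
     (\<forall>g\<in>carrier G. \<forall>h\<in>carrier G. weakly_connected_to G L R g h)"

definition retraction :: "('a, 'b) monoid_scheme \<Rightarrow> 'a set \<Rightarrow> ('a \<Rightarrow> 'a) \<Rightarrow> bool" where
  "retraction G K \<phi> \<longleftrightarrow> \<phi> \<in> hom G G \<and> (\<forall>g\<in>carrier G. \<phi> g \<in> K) \<and> (\<forall>k\<in>K. \<phi> k = k)"

end

theory Submission
  imports Defs
begin

lemma arcK:
  fixes G (structure)
  assumes G: "group G" and K: "subgroup K G" and L: "L' \<subseteq> K"
  shows "two_sided_arc (G\<lparr>carrier:=K\<rparr>) L' R' x y \<longleftrightarrow>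
     x\<in>K \<and> y\<in>K \<and> (\<exists>l\<in>L'. \<exists>r\<in>R'. y = inv\<^bsub>G\<^esub> l \<otimes>\<^bsub>G\<^esub> x \<otimes>\<^bsub>G\<^esub> r)"
proof -
  have "\<And>l. l \<in> L' \<Longrightarrow> inv\<^bsub>G\<lparr>carrier:=K\<rparr>\<^esub> l = inv\<^bsub>G\<^esub> l"
    using group.m_inv_consistent[OF G K] L by auto
  then show ?thesis unfolding two_sided_arc_def by auto
qed

lemma cancel1:
  fixes G (structure)
  assumes G: "group G" and c: "a\<in>carrier G" "b\<in>carrier G" "z\<in>carrier G"
  shows "a \<otimes> (inv a \<otimes> z \<otimes> b) \<otimes> inv b = z"
proof -
  interpret group G by (rule G)
  show ?thesis using c by (simp add: m_assoc[symmetric]) (simp add: m_assoc)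
qed

lemma cancel2:
  fixes G (structure)
  assumes G: "group G" and c: "a\<in>carrier G" "b\<in>carrier G" "z\<in>carrier G"
  shows "inv a \<otimes> (a \<otimes> z \<otimes> inv b) \<otimes> b = z"
proof -
  interpret group G by (rule G)
  show ?thesis using c by (simp add: m_assoc[symmetric]) (simp add: m_assoc)
qed

lemma project:
  fixes G (structure)
  assumes G: "group G" and K: "subgroup K G" and ret: "retraction G K \<phi>"
    and L: "L \<subseteq> carrier G" and R: "R \<subseteq> carrier G"
    and p: "(\<lambda>x y. two_sided_arc G L R x y \<or> two_sided_arc G L R y x)\<^sup>*\<^sup>* g h"
  shows "(\<lambda>x y. two_sided_arc (G\<lparr>carrier:=K\<rparr>) (\<phi>`L) (\<phi>`R) x y \<or>
             two_sided_arc (G\<lparr>carrier:=K\<rparr>) (\<phi>`L) (\<phi>`R) y x)\<^sup>*\<^sup>* (\<phi> g) (\<phi> h)"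
  using p
proof (induction rule: rtranclp_induct)
  case base then show ?case by simp
next
  case (step y z)
  interpret gh: group_hom G G \<phi>
    using ret G unfolding retraction_def group_hom_def group_hom_axioms_def by auto
  have PL: "\<phi>`L \<subseteq> K" using ret L unfolding retraction_def by auto
  have inK: "\<And>a. a \<in> carrier G \<Longrightarrow> \<phi> a \<in> K" using ret unfolding retraction_def by auto
  have arc: "two_sided_arc (G\<lparr>carrier:=K\<rparr>) (\<phi>`L) (\<phi>`R) (\<phi> a) (\<phi> b)"
    if "two_sided_arc G L R a b" for a b
  proof -
    from that obtain l r where lr: "l\<in>L" "r\<in>R" "a \<in> carrier G" "b \<in> carrier G"
      "b = inv l \<otimes>\<^bsub>G\<^esub> a \<otimes>\<^bsub>G\<^esub> r"
      unfolding two_sided_arc_def by auto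
    have "\<phi> b = inv (\<phi> l) \<otimes>\<^bsub>G\<^esub> \<phi> a \<otimes>\<^bsub>G\<^esub> \<phi> r"
      using lr L R by (simp add: subsetD)
    then show ?thesis unfolding arcK[OF G K PL] using lr inK[of a] inK[of b] by blast
  qed
  from step.hyps(2) arc have "two_sided_arc (G\<lparr>carrier:=K\<rparr>) (\<phi>`L) (\<phi>`R) (\<phi> y) (\<phi> z) \<or>
             two_sided_arc (G\<lparr>carrier:=K\<rparr>) (\<phi>`L) (\<phi>`R) (\<phi> z) (\<phi> y)" by blast
  with step.IH show ?case by (rule rtranclp.rtrancl_into_rtrancl)
qed

lemma lift:
  fixes G (structure)
  assumes G: "group G" and K: "subgroup K G" and ret: "retraction G K \<phi>"
    and L: "L \<subseteq> carrier G" and R: "R \<subseteq> carrier G"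
    and p: "(\<lambda>x y. two_sided_arc (G\<lparr>carrier:=K\<rparr>) (\<phi>`L) (\<phi>`R) x y \<or>
             two_sided_arc (G\<lparr>carrier:=K\<rparr>) (\<phi>`L) (\<phi>`R) y x)\<^sup>*\<^sup>* x y"
  shows "\<And>g. g \<in> carrier G \<Longrightarrow> \<phi> g = x \<Longrightarrow> \<exists>h\<in>carrier G. \<phi> h = y \<and> weakly_connected_to G L R g h"
  using p
proof (induction rule: rtranclp_induct)
  case base then show ?case unfolding weakly_connected_to_def by auto
next
  case (step y z g)
  interpret gh: group_hom G G \<phi>
    using ret G unfolding retraction_def group_hom_def group_hom_axioms_def by auto
  interpret group G by (rule G)
  have PL: "\<phi>`L \<subseteq> K" using ret L unfolding retraction_def by auto
  obtain h where h: "h \<in> carrier G" "\<phi> h = y" "weakly_connected_to G L R g h"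
    using step.IH step.prems by blast
  from step.hyps(2) show ?case
  proof
    assume "two_sided_arc (G\<lparr>carrier:=K\<rparr>) (\<phi>`L) (\<phi>`R) y z"
    then obtain l r where lr: "l\<in>L" "r\<in>R" "z = inv (\<phi> l) \<otimes>\<^bsub>G\<^esub> y \<otimes>\<^bsub>G\<^esub> \<phi> r"
      using arcK[OF G K PL] by auto
    define h' where "h' = inv l \<otimes>\<^bsub>G\<^esub> h \<otimes>\<^bsub>G\<^esub> r"
    have lc: "l \<in> carrier G" "r \<in> carrier G" using lr L R by auto
    have h'c: "h' \<in> carrier G" unfolding h'_def using lc h by simp
    have "\<phi> h' = z" unfolding h'_def using lc h lr by simp
    moreover have "two_sided_arc G L R h h'"
      unfolding two_sided_arc_def using h h'c lr h'_def by auto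
    hence "weakly_connected_to G L R g h'" using rtranclp.rtrancl_into_rtrancl[OF h(3)[unfolded weakly_connected_to_def], of h']
      unfolding weakly_connected_to_def by blast
    ultimately show ?thesis using h'c by blast
  next
    assume "two_sided_arc (G\<lparr>carrier:=K\<rparr>) (\<phi>`L) (\<phi>`R) z y"
    then obtain l r where lr: "l\<in>L" "r\<in>R" "y = inv (\<phi> l) \<otimes>\<^bsub>G\<^esub> z \<otimes>\<^bsub>G\<^esub> \<phi> r" "z \<in> K"
      using arcK[OF G K PL] by auto
    have zc: "z \<in> carrier G" using lr K subgroup.subset by blast
    define h' where "h' = l \<otimes>\<^bsub>G\<^esub> h \<otimes>\<^bsub>G\<^esub> inv r"
    have lc: "l \<in> carrier G" "r \<in> carrier G" using lr L R by auto
    have h'c: "h' \<in> carrier G" unfolding h'_def using lc h by simp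
    have "\<phi> h' = \<phi> l \<otimes>\<^bsub>G\<^esub> y \<otimes>\<^bsub>G\<^esub> inv (\<phi> r)" unfolding h'_def using lc h by simp
    also have "\<dots> = z" using lr lc zc
      by (simp add: cancel1[OF G])
    finally have phz: "\<phi> h' = z" .
    have "h = inv l \<otimes>\<^bsub>G\<^esub> h' \<otimes>\<^bsub>G\<^esub> r" unfolding h'_def using lc h
      by (simp add: cancel2[OF G])
    hence "two_sided_arc G L R h' h"
      unfolding two_sided_arc_def using h h'c lr by auto
    hence "weakly_connected_to G L R g h'" using rtranclp.rtrancl_into_rtrancl[OF h(3)[unfolded weakly_connected_to_def], of h']
      unfolding weakly_connected_to_def by blast
    then show ?thesis using h'c phz by blast
  qed
qed

lemma wc_sym:
  assumes "weakly_connected_to G L R g h" shows "weakly_connected_to G L R h g"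
proof -
  have e: "conversep (\<lambda>x y. two_sided_arc G L R x y \<or> two_sided_arc G L R y x) =
        (\<lambda>x y. two_sided_arc G L R x y \<or> two_sided_arc G L R y x)" by (auto simp: fun_eq_iff)
  show ?thesis using assms rtranclp_converseI[of "(\<lambda>x y. two_sided_arc G L R x y \<or> two_sided_arc G L R y x)" g h]
    unfolding weakly_connected_to_def e by simp
qed

lemma wc_trans:
  "weakly_connected_to G L R g h \<Longrightarrow> weakly_connected_to G L R h k \<Longrightarrow> weakly_connected_to G L R g k"
  unfolding weakly_connected_to_def by (rule rtranclp_trans)

theorem mainTheorem18:
  fixes G (structure) and K :: "'a set" and \<phi> :: "'a \<Rightarrow> 'a" and L R :: "'a set"
  assumes "group G"
    and "subgroup K G"
    and "retraction G K \<phi>"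
    and "L \<subseteq> carrier G" and "L \<noteq> {}"
    and "R \<subseteq> carrier G" and "R \<noteq> {}"
  shows "weakly_connected_2S G L R \<longleftrightarrow>
           (weakly_connected_2S (G\<lparr>carrier := K\<rparr>) (\<phi> ` L) (\<phi> ` R) \<and>
            (\<forall>g\<in>kernel G G \<phi>. \<forall>h\<in>kernel G G \<phi>. weakly_connected_to G L R g h))"
proof
  assume W: "weakly_connected_2S G L R"
  have KG: "K \<subseteq> carrier G" using assms(2) subgroup.subset by blast
  have fixk: "\<And>k. k \<in> K \<Longrightarrow> \<phi> k = k" using assms(3) unfolding retraction_def by auto
  have "weakly_connected_2S (G\<lparr>carrier := K\<rparr>) (\<phi> ` L) (\<phi> ` R)"
    unfolding weakly_connected_2S_def
  proof (intro ballI)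
    fix g h assume gh: "g \<in> carrier (G\<lparr>carrier := K\<rparr>)" "h \<in> carrier (G\<lparr>carrier := K\<rparr>)"
    hence "g \<in> carrier G" "h \<in> carrier G" "\<phi> g = g" "\<phi> h = h" using KG fixk by auto
    note gh' = this
    from W gh' have "weakly_connected_to G L R g h" unfolding weakly_connected_2S_def by blast
    hence "weakly_connected_to (G\<lparr>carrier := K\<rparr>) (\<phi> ` L) (\<phi> ` R) (\<phi> g) (\<phi> h)"
      unfolding weakly_connected_to_def by (rule project[OF assms(1-4,6)])
    thus "weakly_connected_to (G\<lparr>carrier := K\<rparr>) (\<phi> ` L) (\<phi> ` R) g h" using gh' by simp
  qed
  moreover have "\<forall>g\<in>kernel G G \<phi>. \<forall>h\<in>kernel G G \<phi>. weakly_connected_to G L R g h"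
    using W unfolding weakly_connected_2S_def kernel_def by auto
  ultimately show "weakly_connected_2S (G\<lparr>carrier := K\<rparr>) (\<phi> ` L) (\<phi> ` R) \<and>
            (\<forall>g\<in>kernel G G \<phi>. \<forall>h\<in>kernel G G \<phi>. weakly_connected_to G L R g h)" ..
next
  assume A: "weakly_connected_2S (G\<lparr>carrier := K\<rparr>) (\<phi> ` L) (\<phi> ` R) \<and>
            (\<forall>g\<in>kernel G G \<phi>. \<forall>h\<in>kernel G G \<phi>. weakly_connected_to G L R g h)"
  have one: "\<one> \<in> K" using assms(2) subgroup.one_closed by blast
  have inK: "\<And>a. a \<in> carrier G \<Longrightarrow> \<phi> a \<in> K" using assms(3) unfolding retraction_def by auto
  have toN: "\<exists>n\<in>kernel G G \<phi>. weakly_connected_to G L R g n" if g: "g \<in> carrier G" for g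
  proof -
    have "weakly_connected_to (G\<lparr>carrier := K\<rparr>) (\<phi> ` L) (\<phi> ` R) (\<phi> g) \<one>"
      using A one inK[OF g] unfolding weakly_connected_2S_def by auto
    then obtain n where "n \<in> carrier G" "\<phi> n = \<one>" "weakly_connected_to G L R g n"
      using lift[OF assms(1-4,6) _ g] unfolding weakly_connected_to_def by blast
    then show ?thesis unfolding kernel_def by auto
  qed
  show "weakly_connected_2S G L R" unfolding weakly_connected_2S_def
  proof (intro ballI)
    fix g h assume "g \<in> carrier G" "h \<in> carrier G"
    then obtain n m where "n\<in>kernel G G \<phi>" "weakly_connected_to G L R g n"
      "m\<in>kernel G G \<phi>" "weakly_connected_to G L R h m" using toN by blast
    note nm = this
    have "weakly_connected_to G L R n m" using A nm by blast
    hence "weakly_connected_to G L R g m" by (rule wc_trans[OF nm(2)])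
    moreover have "weakly_connected_to G L R m h" using nm(4) by (rule wc_sym)
    ultimately show "weakly_connected_to G L R g h" by (rule wc_trans)
  qed
qed

end
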